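(* Let $G$ be a discrete group, $\mathfrak g$ a finite string of elements of $G$, $\mathcal E$ a finite partition of $G$, $\ell=|Con(\mathfrak g,\mathcal E)|$, and let $(B-A)X=0$ be a subsystem of $Eq(\mathfrak g,\mathcal E)$ consisting of $p$ equations $A_tX=B_tX$ ($A,B$ the $p\times\ell$ $(0,1)$-matrices with rows $A_t,B_t$). Suppose that $\sum_{t=1}^p(B_t-A_t)=(1,1,\dots,1)$ and that there is a $p\times p$ permutation matrix $P$, corresponding to a permutation $\pi$ of $\{1,\dots,p\}$ (so that row $i$ of $PM$ is row $\pi(i)$ of $M$), such that the first $p-1$ rows of $PB-P^+A$ have nonnegative entries. Then $\tau(G)\le 1+|A_{\pi(1)}|+\ell$, where $|A_{\pi(1)}|$ denotes the number of entries equal to $1$ in the row $A_{\pi(1)}$.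
   Context: Configurations: for $\mathfrak g=(g_1,\dots,g_n)$ and a partition $\mathcal E=\{E_1,\dots,E_m\}$ of $G$, a configuration is $C=(c_0,\dots,c_n)\in\{1,\dots,m\}^{n+1}$ such that some $x\in G$ has $x\in E_{c_0}$ and $g_ix\in E_{c_i}$ ($1\le i\le n$); $Con(\mathfrak g,\mathcal E)=\{C_1,\dots,C_\ell\}$ is the set of configurations. The configuration equations $Eq(\mathfrak g,\mathcal E)$: variables $f_C$, equations $\sum_{C:\,c_j=i}f_C=\sum_{C:\,c_k=i}f_C$ for $1\le i\le m$, $0\le j,k\le n$, each written $aX=bX$ with $X=(f_{C_1},\dots,f_{C_\ell})^t$ and $a,b\in\{0,1\}^\ell$ the indicator vectors of the configurations on each side. A subsystem is a finite list (repetitions allowed, sides may be interchanged) of such equations. For a permutation matrix $P$ with rows $P_1,\dots,P_p$, $P^+$ denotes the matrix with rows $P_2,\dots,P_p,P_1$. Tarski number: a complete paradoxical decomposition of $G$ is a partition $\{A_1,\dots,A_r,B_1,\dots,B_s\}$ of $G$ with elements $a_i,b_j\in G$ such that $\{a_iA_i\}$ and $\{b_jB_j\}$ are each partitions of $G$; $\tau(G)$ is the minimum of $r+s$ over all such ($\infty$ if none). *)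

theory Defs
  imports "HOL-Algebra.Group" "HOL-Library.Extended_Nat"
begin

definition is_partition_list :: "('a, 'b) monoid_scheme \<Rightarrow> 'a set list \<Rightarrow> bool" where
  "is_partition_list G Es \<longleftrightarrow>
     (\<forall>i < length Es. Es ! i \<noteq> {} \<and> Es ! i \<subseteq> carrier G) \<and>
     (\<forall>i < length Es. \<forall>j < length Es. i \<noteq> j \<longrightarrow> Es ! i \<inter> Es ! j = {}) \<and>
     (\<Union>i < length Es. Es ! i) = carrier G"

definition ltrans :: "('a, 'b) monoid_scheme \<Rightarrow> 'a \<Rightarrow> 'a set \<Rightarrow> 'a set" where
  "ltrans G a X = (\<lambda>x. a \<otimes>\<^bsub>G\<^esub> x) ` X"

definition complete_paradoxical_decomposition ::
  "('a, 'b) monoid_scheme \<Rightarrow> 'a set list \<Rightarrow> 'a list \<Rightarrow> 'a set list \<Rightarrow> 'a list \<Rightarrow> bool" where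
  "complete_paradoxical_decomposition G As as Bs bs \<longleftrightarrow>
     length as = length As \<and> length bs = length Bs \<and>
     set as \<subseteq> carrier G \<and> set bs \<subseteq> carrier G \<and>
     is_partition_list G (As @ Bs) \<and>
     is_partition_list G (map (\<lambda>i. ltrans G (as ! i) (As ! i)) [0..<length As]) \<and>
     is_partition_list G (map (\<lambda>j. ltrans G (bs ! j) (Bs ! j)) [0..<length Bs])"

definition tarski_number :: "('a, 'b) monoid_scheme \<Rightarrow> enat" where
  "tarski_number G = Inf {enat (length As + length Bs) | As as Bs bs.
      complete_paradoxical_decomposition G As as Bs bs}"

text \<open>Configurations of the string gs = (g_1,...,g_n) w.r.t. the partition
  Es = (E_0,...,E_{m-1}) (indices shifted to start at 0): lists C = (c_0,...,c_n).\<close>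
definition configurations :: "('a, 'b) monoid_scheme \<Rightarrow> 'a list \<Rightarrow> 'a set list \<Rightarrow> nat list set" where
  "configurations G gs Es = {C. length C = length gs + 1 \<and> (\<forall>i < length C. C ! i < length Es) \<and>
      (\<exists>x \<in> carrier G. x \<in> Es ! (C ! 0) \<and>
         (\<forall>i < length gs. (gs ! i) \<otimes>\<^bsub>G\<^esub> x \<in> Es ! (C ! (i + 1))))}"

text \<open>The configuration equations: an equation a X = b X is represented by the pair of
  the supports of the indicator vectors a and b (subsets of the set of configurations).
  The equation for i, j, k is  sum over C with c_j = i of f_C  =  sum over C with c_k = i of f_C.\<close>
definition config_equations :: "('a, 'b) monoid_scheme \<Rightarrow> 'a list \<Rightarrow> 'a set list \<Rightarrow>
    (nat list set \<times> nat list set) set" where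
  "config_equations G gs Es = {({C \<in> configurations G gs Es. C ! j = i},
                                 {C \<in> configurations G gs Es. C ! k = i}) | i j k.
      i < length Es \<and> j \<le> length gs \<and> k \<le> length gs}"

definition ind :: "nat list set \<Rightarrow> nat list \<Rightarrow> int" where
  "ind S C = (if C \<in> S then 1 else 0)"

end

theory Submission imports Defs begin

lemma part_map:
  assumes "distinct xs"
    and "\<forall>a\<in>set xs. F a \<noteq> {} \<and> F a \<subseteq> carrier G"
    and "\<forall>a\<in>set xs. \<forall>b\<in>set xs. a \<noteq> b \<longrightarrow> F a \<inter> F b = {}"
    and "(\<Union>a\<in>set xs. F a) = carrier G"
  shows "is_partition_list G (map F xs)"
proof -
  have u: "(\<Union>i<length xs. F (xs ! i)) = (\<Union>a\<in>set xs. F a)"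
    by (auto simp: set_conv_nth)
  show ?thesis unfolding is_partition_list_def
    using assms u by (auto simp: nth_eq_iff_index_eq)
qed

lemma map_ltrans:
  "map (\<lambda>i. ltrans G (map T xs ! i) (map F xs ! i)) [0..<length (map F xs)]
   = map (\<lambda>a. ltrans G (T a) (F a)) xs"
  by (rule nth_equalityI) auto

primrec kch :: "('a,'b) monoid_scheme \<Rightarrow> (nat \<Rightarrow> 'a) \<Rightarrow> (nat \<Rightarrow> nat) \<Rightarrow> nat \<Rightarrow> 'a" where
  "kch G h \<pi> 0 = h (\<pi> 0)"
| "kch G h \<pi> (Suc s) = h (\<pi> (Suc s)) \<otimes>\<^bsub>G\<^esub> kch G h \<pi> s"

context group begin

lemma abstract_paradox:
  fixes cfg :: "'a \<Rightarrow> 'c" and Img :: "nat \<Rightarrow> 'c set"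
  assumes fin: "finite Con"
  and cfg_in: "\<forall>x\<in>carrier G. cfg x \<in> Con"
  and cfg_surj: "\<forall>C\<in>Con. \<exists>x\<in>carrier G. cfg x = C"
  and A0: "A0 \<subseteq> Con"
  and k_in: "\<forall>s<p. k s \<in> carrier G"
  and st1: "\<forall>x\<in>carrier G. cfg x \<in> A0 \<longrightarrow> st x < p \<and> cfg (k (st x) \<otimes> x) \<in> Img (st x)"
  and st2: "\<forall>s<p. \<forall>y\<in>carrier G. cfg y \<in> Img s \<longrightarrow> (\<exists>x\<in>carrier G. cfg x \<in> A0 \<and> st x = s \<and> k s \<otimes> x = y)"
  and cnt: "\<forall>C\<in>Con. card {s. s<p \<and> C \<in> Img s} = (if C \<in> A0 then 2 else 1)"
  shows "tarski_number G \<le> enat (1 + card A0 + card Con)"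
proof -
  define W where "W = {x\<in>carrier G. cfg x \<in> A0}"
  define S where "S C = {s. s<p \<and> C \<in> Img s}" for C
  define s1 where "s1 C = Min (S C)" for C
  define s2 where "s2 C = Max (S C)" for C
  define P where "P s C = {x\<in>W. st x = s \<and> cfg (k s \<otimes> x) = C}" for s C
  define X where "X C = {y\<in>carrier G. cfg y = C}" for C
  have Sfin: "finite (S C)" for C unfolding S_def by auto
  have Sne: "S C \<noteq> {}" if "C \<in> Con" for C
    using cnt that unfolding S_def by (metis card.empty one_neq_zero zero_neq_numeral)
  have s1S: "s1 C \<in> S C" if "C \<in> Con" for C using Sfin Sne[OF that] s1_def by auto
  have s2S: "s2 C \<in> S C" if "C \<in> Con" for C using Sfin Sne[OF that] s2_def by auto
  have other: "C \<in> A0 \<and> s = s2 C" if "C \<in> Con" "s \<in> S C" "s \<noteq> s1 C" for C s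
  proof (cases "C \<in> A0")
    case False
    then have "card (S C) = 1" using cnt that(1) unfolding S_def by auto
    then obtain a where "S C = {a}" by (auto simp: card_Suc_eq)
    then show ?thesis using that s1_def by auto
  next
    case True
    then have "card (S C) = 2" using cnt that(1) unfolding S_def by auto
    then obtain a b where ab: "S C = {a,b}" "a \<noteq> b" by (auto simp: card_2_iff)
    then show ?thesis using that s1_def s2_def True by auto
  qed
  have s12: "s1 C \<noteq> s2 C" if "C \<in> A0" for C
  proof -
    have "C \<in> Con" using that A0 by auto
    then have "card (S C) = 2" using cnt that unfolding S_def by auto
    then obtain a b where ab: "S C = {a,b}" "a \<noteq> b" by (auto simp: card_2_iff)
    then show ?thesis using s1_def s2_def by (auto simp: min_def max_def)
  qed
  have trans: "(\<lambda>x. k s \<otimes> x) ` P s C = X C" if "s \<in> S C" for s C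
  proof
    show "(\<lambda>x. k s \<otimes> x) ` P s C \<subseteq> X C"
      using that k_in unfolding P_def X_def W_def S_def by auto
    show "X C \<subseteq> (\<lambda>x. k s \<otimes> x) ` P s C"
    proof
      fix y assume "y \<in> X C"
      then have "y \<in> carrier G" "cfg y \<in> Img s" "s < p" using that unfolding X_def S_def by auto
      then obtain x where "x\<in>carrier G" "cfg x \<in> A0" "st x = s" "k s \<otimes> x = y" using st2 by blast
      then show "y \<in> (\<lambda>x. k s \<otimes> x) ` P s C" using \<open>y \<in> X C\<close> unfolding P_def W_def X_def by auto
    qed
  qed
  have Xne: "X C \<noteq> {}" if "C \<in> Con" for C using cfg_surj that unfolding X_def by auto
  have Pne: "P s C \<noteq> {}" if "s \<in> S C" "C \<in> Con" for s C
    using trans[OF that(1)] Xne[OF that(2)] by auto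
  have PW: "P s C \<subseteq> W" for s C unfolding P_def by auto
  have Wc: "W \<subseteq> carrier G" unfolding W_def by auto
  have PWc: "P s C \<subseteq> carrier G" for s C using PW Wc by blast
  have XA: "X C \<subseteq> W" if "C \<in> A0" for C using that unfolding X_def W_def by auto
  obtain CL where CL: "distinct CL" "set CL = Con" using finite_distinct_list[OF fin] by blast
  obtain AL where AL: "distinct AL" "set AL = A0" using finite_distinct_list[of A0] fin A0 finite_subset by blast
  define F where "F = case_sum (\<lambda>C. P (s1 C) C) (case_option (carrier G - W) (\<lambda>C. P (s2 C) C))"
  define T where "T = case_sum (\<lambda>C. k (s1 C)) (case_option \<one> (\<lambda>C. k (s2 C)))"
  define NL where "NL = (if W = carrier G then [] else [Inr None :: 'c + 'c option])"
  define xa where "xa = (map Inl CL :: ('c + 'c option) list)"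
  define xb where "xb = (NL @ map (Inr \<circ> Some) AL :: ('c + 'c option) list)"
  have dxa: "distinct xa" using CL unfolding xa_def by (simp add: distinct_map)
  have dxb: "distinct xb" using AL unfolding xb_def NL_def by (auto simp: distinct_map inj_on_def)
  have sxa: "set xa = Inl ` Con" using CL unfolding xa_def by auto
  have sxb: "set xb = set NL \<union> (Inr \<circ> Some) ` A0" using AL unfolding xb_def by auto
  have lxa: "length xa = card Con" using CL distinct_card unfolding xa_def by fastforce
  have lxb: "length xb \<le> 1 + card A0" using AL distinct_card unfolding xb_def NL_def by fastforce
  have p1: "is_partition_list G (map F (xa @ xb))"
  proof (rule part_map)
    show "distinct (xa @ xb)" using dxa dxb sxa sxb NL_def by auto
    show "\<forall>a\<in>set (xa @ xb). F a \<noteq> {} \<and> F a \<subseteq> carrier G"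
      using sxa sxb Pne s1S s2S PWc Wc A0 unfolding F_def NL_def by (auto split: if_splits) (meson PWc subsetD)+
    show "\<forall>a\<in>set (xa @ xb). \<forall>b\<in>set (xa @ xb). a \<noteq> b \<longrightarrow> F a \<inter> F b = {}"
      using sxa sxb s12 PW unfolding F_def NL_def by (fastforce simp: P_def split: if_splits)
    show "(\<Union>a\<in>set (xa @ xb). F a) = carrier G"
    proof
      show "(\<Union>a\<in>set (xa @ xb). F a) \<subseteq> carrier G"
        using sxa sxb PWc Wc unfolding F_def NL_def by (auto split: if_splits)
      show "carrier G \<subseteq> (\<Union>a\<in>set (xa @ xb). F a)"
      proof
        fix x assume xc: "x \<in> carrier G"
        show "x \<in> (\<Union>a\<in>set (xa @ xb). F a)"
        proof (cases "x \<in> W")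
          case False
          then have "Inr None \<in> set xb" using xc unfolding xb_def NL_def by auto
          then show ?thesis using False xc unfolding F_def by force
        next
          case True
          define s where "s = st x"
          define C where "C = cfg (k s \<otimes> x)"
          have "s < p" "C \<in> Img s" using st1 True unfolding W_def s_def C_def by auto
          then have sS: "s \<in> S C" unfolding S_def by auto
          have Cc: "C \<in> Con" using cfg_in k_in \<open>s<p\<close> True Wc unfolding C_def by auto
          have xP: "x \<in> P s C" using True unfolding P_def s_def C_def by auto
          show ?thesis
          proof (cases "s = s1 C")
            case True
            then show ?thesis using xP Cc sxa unfolding F_def by force
          next
            case False
            then have "C \<in> A0" "s = s2 C" using other[OF Cc sS] by auto
            then show ?thesis using xP sxb unfolding F_def by force
          qed
        qed
      qed
    qed
  qed
  define F1 where "F1 = case_sum X (\<lambda>_::'c option. {})"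
  have e1: "map (\<lambda>a. ltrans G (T a) (F a)) xa = map F1 xa"
  proof (rule map_cong[OF refl])
    fix a assume "a \<in> set xa"
    then obtain C where "a = Inl C" "C \<in> Con" using sxa by auto
    then show "ltrans G (T a) (F a) = F1 a"
      using trans[OF s1S[of C]] unfolding F_def T_def F1_def ltrans_def by simp
  qed
  have p2: "is_partition_list G (map F1 xa)"
  proof (rule part_map)
    show "distinct xa" by fact
    show "\<forall>a\<in>set xa. F1 a \<noteq> {} \<and> F1 a \<subseteq> carrier G"
      using sxa Xne unfolding F1_def X_def by auto
    show "\<forall>a\<in>set xa. \<forall>b\<in>set xa. a \<noteq> b \<longrightarrow> F1 a \<inter> F1 b = {}"
      using sxa unfolding F1_def X_def by auto
    show "(\<Union>a\<in>set xa. F1 a) = carrier G"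
      using sxa cfg_in unfolding F1_def X_def by auto
  qed
  define F2 where "F2 = case_sum (\<lambda>_::'c. {}) (case_option (carrier G - W) X)"
  have e2: "map (\<lambda>a. ltrans G (T a) (F a)) xb = map F2 xb"
  proof (rule map_cong[OF refl])
    fix a assume "a \<in> set xb"
    then consider "a = Inr None" | C where "a = Inr (Some C)" "C \<in> A0"
      using sxb NL_def by (auto split: if_splits)
    then show "ltrans G (T a) (F a) = F2 a"
    proof cases
      case 1 then show ?thesis unfolding F_def T_def F2_def ltrans_def
        by (auto simp: image_def)
    next
      case (2 C) then show ?thesis
      using trans[OF s2S[of C]] A0 unfolding F_def T_def F2_def ltrans_def by auto
    qed
  qed
  have p3: "is_partition_list G (map F2 xb)"
  proof (rule part_map)
    show "distinct xb" by fact
    show "\<forall>a\<in>set xb. F2 a \<noteq> {} \<and> F2 a \<subseteq> carrier G"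
      using sxb Xne A0 Wc unfolding F2_def X_def NL_def by (auto split: if_splits)
    show "\<forall>a\<in>set xb. \<forall>b\<in>set xb. a \<noteq> b \<longrightarrow> F2 a \<inter> F2 b = {}"
      using sxb XA unfolding F2_def NL_def by (auto split: if_splits simp: X_def)
    show "(\<Union>a\<in>set xb. F2 a) = carrier G"
      using sxb Wc unfolding F2_def X_def NL_def W_def by (auto split: if_splits)
  qed
  have tin: "set (map T (xa @ xb)) \<subseteq> carrier G"
    using sxa sxb s1S s2S k_in A0 unfolding T_def S_def NL_def by (auto split: if_splits)
  have cpd: "complete_paradoxical_decomposition G (map F xa) (map T xa) (map F xb) (map T xb)"
  proof -
    have q2: "is_partition_list G (map (\<lambda>i. ltrans G (map T xa ! i) (map F xa ! i)) [0..<length (map F xa)])"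
      using p2 by (simp only: map_ltrans e1)
    have q3: "is_partition_list G (map (\<lambda>i. ltrans G (map T xb ! i) (map F xb ! i)) [0..<length (map F xb)])"
      using p3 by (simp only: map_ltrans e2)
    show ?thesis unfolding complete_paradoxical_decomposition_def
      using p1 q2 q3 tin by (simp only: map_append length_map set_map) (auto simp: image_Un)
  qed
  have "tarski_number G \<le> enat (length (map F xa) + length (map F xb))"
    unfolding tarski_number_def by (rule Inf_lower) (use cpd in blast)
  also have "\<dots> \<le> enat (1 + card A0 + card Con)" using lxa lxb by simp
  finally show ?thesis .
qed

lemma chain_paradox:
  fixes cfg :: "'a \<Rightarrow> nat list" and A B :: "nat \<Rightarrow> nat list set" and h :: "nat \<Rightarrow> 'a"
    and \<pi> :: "nat \<Rightarrow> nat"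
  assumes fin: "finite Con"
  and cfg_in: "\<forall>x\<in>carrier G. cfg x \<in> Con"
  and cfg_surj: "\<forall>C\<in>Con. \<exists>x\<in>carrier G. cfg x = C"
  and AB: "\<forall>t<p. A t \<subseteq> Con \<and> B t \<subseteq> Con"
  and H: "\<forall>t<p. h t \<in> carrier G \<and> (\<forall>x\<in>carrier G. cfg x \<in> A t \<longleftrightarrow> cfg (h t \<otimes> x) \<in> B t)"
  and sum1: "\<forall>C\<in>Con. (\<Sum>t<p. ind (B t) C - ind (A t) C) = 1"
  and perm: "bij_betw \<pi> {..<p} {..<p}"
  and sub: "\<forall>i. i+1<p \<longrightarrow> A (\<pi> (i+1)) \<subseteq> B (\<pi> i)"
  and p0: "0 < p"
  shows "tarski_number G \<le> enat (1 + card (A (\<pi> 0)) + card Con)"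
proof -
  define k where "k = kch G h \<pi>"
  define stop where "stop s x \<longleftrightarrow> s+1 = p \<or> cfg (k s \<otimes> x) \<notin> A (\<pi> (s+1))" for s x
  define st where "st x = (LEAST s. s < p \<and> stop s x)" for x
  define reach where "reach s x \<longleftrightarrow> (\<forall>r<s. cfg (k r \<otimes> x) \<in> A (\<pi> (r+1)))" for s x
  define Img where "Img s = (if s+1 < p then B (\<pi> s) - A (\<pi> (s+1)) else B (\<pi> s))" for s
  have \<pi>p: "\<pi> s < p" if "s < p" for s using perm that by (auto simp: bij_betw_def)
  have hin: "h (\<pi> s) \<in> carrier G" if "s < p" for s using H \<pi>p[OF that] by auto
  have k_in: "k s \<in> carrier G" if "s < p" for s
    using that by (induction s) (auto simp: k_def intro!: hin)
  have kSuc: "k (Suc s) \<otimes> x = h (\<pi> (Suc s)) \<otimes> (k s \<otimes> x)" if "Suc s < p" "x \<in> carrier G" for s x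
    using that k_in hin by (simp add: k_def m_assoc)
  have inv1: "cfg (k s \<otimes> x) \<in> B (\<pi> s)"
    if "s < p" "x \<in> carrier G" "cfg x \<in> A (\<pi> 0)" "reach s x" for s x
    using that
  proof (induction s)
    case 0
    then show ?case using H \<pi>p[OF p0] by (simp add: k_def)
  next
    case (Suc s)
    then have "cfg (k s \<otimes> x) \<in> B (\<pi> s)" unfolding reach_def by auto
    moreover have "cfg (k s \<otimes> x) \<in> A (\<pi> (Suc s))" using Suc.prems unfolding reach_def by auto
    ultimately show ?case using kSuc[OF Suc.prems(1,2)] H \<pi>p[OF Suc.prems(1)] k_in Suc.prems
      by auto
  qed
  have inv2: "\<exists>x\<in>carrier G. cfg x \<in> A (\<pi> 0) \<and> reach s x \<and> k s \<otimes> x = y"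
    if "s < p" "y \<in> carrier G" "cfg y \<in> B (\<pi> s)" for s y
    using that
  proof (induction s arbitrary: y)
    case 0
    define x where "x = inv (h (\<pi> 0)) \<otimes> y"
    have hx: "h (\<pi> 0) \<otimes> x = y" using hin[OF p0] 0 unfolding x_def by (simp add: m_assoc[symmetric])
    have xc: "x \<in> carrier G" using hin[OF p0] 0 unfolding x_def by simp
    then have "cfg x \<in> A (\<pi> 0)" using H \<pi>p[OF p0] hx 0 by auto
    then show ?case using xc hx unfolding reach_def by (auto simp: k_def)
  next
    case (Suc s)
    define z where "z = inv (h (\<pi> (Suc s))) \<otimes> y"
    have hz: "h (\<pi> (Suc s)) \<otimes> z = y" using hin[OF Suc.prems(1)] Suc.prems unfolding z_def
      by (simp add: m_assoc[symmetric])
    have zc: "z \<in> carrier G" using hin[OF Suc.prems(1)] Suc.prems unfolding z_def by simp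
    then have zA: "cfg z \<in> A (\<pi> (Suc s))" using H \<pi>p[OF Suc.prems(1)] hz Suc.prems by auto
    then have "cfg z \<in> B (\<pi> s)" using sub Suc.prems by auto
    then obtain x where x: "x\<in>carrier G" "cfg x \<in> A (\<pi> 0)" "reach s x" "k s \<otimes> x = z"
      using Suc.IH[OF _ zc] Suc.prems by auto
    have "reach (Suc s) x" using x zA unfolding reach_def by (auto simp: less_Suc_eq)
    moreover have "k (Suc s) \<otimes> x = y" using kSuc[OF Suc.prems(1) x(1)] x hz by simp
    ultimately show ?case using x by auto
  qed
  have stP: "st x < p \<and> stop (st x) x \<and> (\<forall>r<st x. \<not> stop r x)" for x
  proof -
    have ex: "p - 1 < p \<and> stop (p - 1) x" using p0 unfolding stop_def by simp
    have a: "st x < p \<and> stop (st x) x" unfolding st_def using ex by (rule LeastI)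
    have b: "\<not> stop r x" if r: "r < st x" for r
    proof -
      have "\<not> (r < p \<and> stop r x)" using not_less_Least[OF r[unfolded st_def]] .
      then show ?thesis using r a by simp
    qed
    show ?thesis using a b by blast
  qed
  have reach_st: "reach (st x) x" for x
    using stP[of x] unfolding reach_def stop_def by auto
  show ?thesis
  proof (rule abstract_paradox[where k=k and st=st and Img=Img and p=p])
    show "finite Con" by fact
    show "\<forall>x\<in>carrier G. cfg x \<in> Con" by fact
    show "\<forall>C\<in>Con. \<exists>x\<in>carrier G. cfg x = C" by fact
    show "A (\<pi> 0) \<subseteq> Con" using AB \<pi>p[OF p0] by auto
    show "\<forall>s<p. k s \<in> carrier G" using k_in by auto
    show "\<forall>x\<in>carrier G. cfg x \<in> A (\<pi> 0) \<longrightarrow> st x < p \<and> cfg (k (st x) \<otimes> x) \<in> Img (st x)"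
    proof (intro ballI impI)
      fix x assume "x \<in> carrier G" "cfg x \<in> A (\<pi> 0)"
      then have "cfg (k (st x) \<otimes> x) \<in> B (\<pi> (st x))" using inv1 stP reach_st by blast
      then show "st x < p \<and> cfg (k (st x) \<otimes> x) \<in> Img (st x)"
        using stP[of x] unfolding Img_def stop_def by auto
    qed
    show "\<forall>s<p. \<forall>y\<in>carrier G. cfg y \<in> Img s \<longrightarrow> (\<exists>x\<in>carrier G. cfg x \<in> A (\<pi> 0) \<and> st x = s \<and> k s \<otimes> x = y)"
    proof (intro allI impI ballI)
      fix s y assume s: "s < p" and y: "y \<in> carrier G" "cfg y \<in> Img s"
      then have "cfg y \<in> B (\<pi> s)" unfolding Img_def by (auto split: if_splits)
      then obtain x where x: "x\<in>carrier G" "cfg x \<in> A (\<pi> 0)" "reach s x" "k s \<otimes> x = y"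
        using inv2 s y by blast
      have "st x = s" unfolding st_def
      proof (rule Least_equality)
        show "s < p \<and> stop s x" using s y x unfolding stop_def Img_def by (auto split: if_splits)
        show "\<And>r. r < p \<and> stop r x \<Longrightarrow> s \<le> r"
        proof (rule ccontr)
          fix r assume r: "r < p \<and> stop r x" "\<not> s \<le> r"
          then show False using x(3) s unfolding reach_def stop_def by auto
        qed
      qed
      then show "\<exists>x\<in>carrier G. cfg x \<in> A (\<pi> 0) \<and> st x = s \<and> k s \<otimes> x = y" using x by blast
    qed
    show "\<forall>C\<in>Con. card {s. s < p \<and> C \<in> Img s} = (if C \<in> A (\<pi> 0) then 2 else 1)"
    proof
      fix C assume C: "C \<in> Con"
      obtain q where q: "p = Suc q" using p0 by (cases p) auto
      have c1: "int (card {s. s < p \<and> C \<in> Img s}) = (\<Sum>s<p. ind (Img s) C)"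
      proof -
        have "{s. s < p \<and> C \<in> Img s} = {s\<in>{..<p}. C \<in> Img s}" by auto
        then have "int (card {s. s < p \<and> C \<in> Img s}) = (\<Sum>s\<in>{s\<in>{..<p}. C \<in> Img s}. 1)" by simp
        also have "\<dots> = (\<Sum>s<p. ind (Img s) C)"
          by (subst sum.inter_filter) (auto simp: ind_def)
        finally show ?thesis .
      qed
      have i1: "ind (Img s) C = ind (B (\<pi> s)) C - ind (A (\<pi> (Suc s))) C" if "s < q" for s
        using that sub q unfolding Img_def ind_def by (auto split: if_splits)
      have i2: "ind (Img q) C = ind (B (\<pi> q)) C" unfolding Img_def ind_def using q by auto
      have "(\<Sum>s<p. ind (Img s) C) = (\<Sum>s<q. ind (B (\<pi> s)) C - ind (A (\<pi> (Suc s))) C) + ind (B (\<pi> q)) C"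
        using i1 i2 q by simp
      also have "\<dots> = (\<Sum>s<p. ind (B (\<pi> s)) C) - (\<Sum>s<p. ind (A (\<pi> s)) C) + ind (A (\<pi> 0)) C"
      proof -
        have sh: "(\<Sum>s<p. ind (A (\<pi> s)) C) = ind (A (\<pi> 0)) C + (\<Sum>s<q. ind (A (\<pi> (Suc s))) C)"
          unfolding q by (rule sum.lessThan_Suc_shift)
        have sb: "(\<Sum>s<p. ind (B (\<pi> s)) C) = (\<Sum>s<q. ind (B (\<pi> s)) C) + ind (B (\<pi> q)) C"
          unfolding q by (rule sum.lessThan_Suc)
        have sd: "(\<Sum>s<q. ind (B (\<pi> s)) C - ind (A (\<pi> (Suc s))) C) = (\<Sum>s<q. ind (B (\<pi> s)) C) - (\<Sum>s<q. ind (A (\<pi> (Suc s))) C)"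
          by (rule sum_subtractf)
        show ?thesis using sh sb sd by linarith
      qed
      also have "(\<Sum>s<p. ind (B (\<pi> s)) C) = (\<Sum>t<p. ind (B t) C)"
        using sum.reindex_bij_betw[OF perm, of "\<lambda>t. ind (B t) C"] by simp
      also have "(\<Sum>s<p. ind (A (\<pi> s)) C) = (\<Sum>t<p. ind (A t) C)"
        using sum.reindex_bij_betw[OF perm, of "\<lambda>t. ind (A t) C"] by simp
      also have "(\<Sum>t<p. ind (B t) C) - (\<Sum>t<p. ind (A t) C) = 1"
        using sum1 C by (simp add: sum_subtractf)
      finally have "int (card {s. s < p \<and> C \<in> Img s}) = 1 + ind (A (\<pi> 0)) C" using c1 by simp
      then show "card {s. s < p \<and> C \<in> Img s} = (if C \<in> A (\<pi> 0) then 2 else 1)"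
        unfolding ind_def by (auto split: if_splits)
    qed
  qed
qed

end

definition idx :: "'a set list \<Rightarrow> 'a \<Rightarrow> nat" where
  "idx Es y = (THE i. i < length Es \<and> y \<in> Es ! i)"

definition gp :: "('a,'b) monoid_scheme \<Rightarrow> 'a list \<Rightarrow> nat \<Rightarrow> 'a" where
  "gp G gs j = (if j = 0 then \<one>\<^bsub>G\<^esub> else gs ! (j - 1))"

definition cfg :: "('a,'b) monoid_scheme \<Rightarrow> 'a list \<Rightarrow> 'a set list \<Rightarrow> 'a \<Rightarrow> nat list" where
  "cfg G gs Es x = map (\<lambda>j. idx Es (gp G gs j \<otimes>\<^bsub>G\<^esub> x)) [0..<length gs + 1]"

context group begin
lemma main_lemma:
  fixes gs :: "'a list" and Es :: "'a set list"
    and Eqs :: "(nat list set \<times> nat list set) list"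
    and \<pi> :: "nat \<Rightarrow> nat"
  assumes Con_def: "Con = configurations G gs Es"
      and p_def: "p = length Eqs"
      and A_def: "A = (\<lambda>t. fst (Eqs ! t))"
      and B_def: "B = (\<lambda>t. snd (Eqs ! t))"
    and gs_in: "set gs \<subseteq> carrier G"
    and part: "is_partition_list G Es"
    and subsys: "set Eqs \<subseteq> config_equations G gs Es"
    and sum_one: "\<forall>C \<in> Con. (\<Sum>t < p. ind (B t) C - ind (A t) C) = 1"
    and perm: "bij_betw \<pi> {..<p} {..<p}"
    and nonneg: "\<forall>i. i + 1 < p \<longrightarrow> (\<forall>C \<in> Con. ind (B (\<pi> i)) C - ind (A (\<pi> (i + 1))) C \<ge> 0)"
  shows "tarski_number G \<le> enat (1 + card (A (\<pi> 0)) + card Con)"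
proof -
  define m where "m = length Es"
  define n where "n = length gs"
  define c where "c = cfg G gs Es"
  have Es_sub: "Es ! i \<subseteq> carrier G" if "i < m" for i using part that unfolding is_partition_list_def m_def by auto
  have Es_disj: "Es ! i \<inter> Es ! j = {}" if "i < m" "j < m" "i \<noteq> j" for i j
    using part that unfolding is_partition_list_def m_def by auto
  have Es_cov: "\<exists>i<m. y \<in> Es ! i" if "y \<in> carrier G" for y
    using part that unfolding is_partition_list_def m_def by auto
  have idx_uniq: "idx Es y = i" if "i < m" "y \<in> Es ! i" for y i
    unfolding idx_def
  proof (rule the_equality)
    show "i < length Es \<and> y \<in> Es ! i" using that m_def by auto
    show "\<And>j. j < length Es \<and> y \<in> Es ! j \<Longrightarrow> j = i" using Es_disj that m_def by blast
  qed
  have idx_in: "idx Es y < m \<and> y \<in> Es ! idx Es y" if "y \<in> carrier G" for y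
    using Es_cov[OF that] idx_uniq by auto
  have gp_in: "gp G gs j \<in> carrier G" if "j \<le> n" for j
    using that gs_in unfolding gp_def n_def by (auto simp: subset_code(1))
  have c_nth: "c x ! j = idx Es (gp G gs j \<otimes> x)" if "j \<le> n" for x j
    using that unfolding c_def cfg_def n_def by (simp add: nth_append del: upt_Suc)
  have c_len: "length (c x) = n + 1" for x unfolding c_def cfg_def n_def by simp
  have cfg_in: "\<forall>x\<in>carrier G. c x \<in> Con"
  proof
    fix x assume x: "x \<in> carrier G"
    have "\<forall>i<length (c x). c x ! i < length Es"
      using c_len c_nth idx_in gp_in x m_def by auto
    moreover have "x \<in> Es ! (c x ! 0)" using c_nth[of 0] idx_in[OF x] x by (simp add: gp_def)
    moreover have "\<forall>i<length gs. gs ! i \<otimes> x \<in> Es ! (c x ! (i + 1))"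
    proof (intro allI impI)
      fix i assume i: "i < length gs"
      have "gp G gs (i+1) = gs ! i" unfolding gp_def by simp
      then show "gs ! i \<otimes> x \<in> Es ! (c x ! (i + 1))"
        using c_nth[of "i+1" x] idx_in gp_in[of "i+1"] x i n_def by auto
    qed
    ultimately show "c x \<in> Con" using x c_len n_def unfolding Con_def configurations_def by auto
  qed
  have cfg_surj: "\<forall>C\<in>Con. \<exists>x\<in>carrier G. c x = C"
  proof
    fix C assume "C \<in> Con"
    then obtain x where C: "length C = n + 1" "\<forall>i < length C. C ! i < m" "x \<in> carrier G"
      "x \<in> Es ! (C ! 0)" "\<forall>i < n. (gs ! i) \<otimes> x \<in> Es ! (C ! (i + 1))"
      unfolding Con_def configurations_def n_def m_def by auto
    have "c x ! j = C ! j" if "j < n + 1" for j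
    proof (cases j)
      case 0
      then show ?thesis using C c_nth[of 0] idx_uniq by (simp add: gp_def)
    next
      case (Suc i)
      then show ?thesis using C c_nth[of j] idx_uniq that by (simp add: gp_def)
    qed
    then have "c x = C" using C c_len by (intro nth_equalityI) auto
    then show "\<exists>x\<in>carrier G. c x = C" using C by blast
  qed
  have fin: "finite Con"
  proof (rule finite_subset)
    show "Con \<subseteq> {C. set C \<subseteq> {..<m} \<and> length C = n + 1}"
      unfolding Con_def configurations_def m_def n_def by (auto simp: in_set_conv_nth)
    show "finite {C. set C \<subseteq> {..<m} \<and> length C = n + 1}"
      by (rule finite_lists_length_eq) simp
  qed
  have eqs: "\<exists>i j k. i < m \<and> j \<le> n \<and> k \<le> n \<and> A t = {C \<in> Con. C ! j = i} \<and> B t = {C \<in> Con. C ! k = i}"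
    if "t < p" for t
  proof -
    have "Eqs ! t \<in> config_equations G gs Es" using subsys that p_def by auto
    then show ?thesis unfolding config_equations_def A_def B_def Con_def m_def n_def by fastforce
  qed
  have AB: "\<forall>t<p. A t \<subseteq> Con \<and> B t \<subseteq> Con" using eqs by blast
  have Hex: "\<exists>h. h \<in> carrier G \<and> (\<forall>x\<in>carrier G. c x \<in> A t \<longleftrightarrow> c (h \<otimes> x) \<in> B t)" if tp: "t < p" for t
  proof -
    obtain i j k where e: "i < m" "j \<le> n" "k \<le> n" "A t = {C \<in> Con. C ! j = i}" "B t = {C \<in> Con. C ! k = i}"
      using eqs[OF tp] by blast
    define h where "h = inv (gp G gs k) \<otimes> gp G gs j"
    have hc: "h \<in> carrier G" unfolding h_def using gp_in e by simp
    have "c x \<in> A t \<longleftrightarrow> c (h \<otimes> x) \<in> B t" if x: "x \<in> carrier G" for x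
    proof -
      have "gp G gs k \<otimes> (h \<otimes> x) = gp G gs j \<otimes> x"
        unfolding h_def using gp_in e x by (simp add: m_assoc[symmetric] r_inv)
      then have "c (h \<otimes> x) ! k = c x ! j" using c_nth e by simp
      moreover have "c x \<in> Con" "c (h \<otimes> x) \<in> Con" using cfg_in x hc by auto
      ultimately show ?thesis using e by auto
    qed
    then show ?thesis using hc by blast
  qed
  obtain h where H: "\<forall>t<p. h t \<in> carrier G \<and> (\<forall>x\<in>carrier G. c x \<in> A t \<longleftrightarrow> c (h t \<otimes> x) \<in> B t)"
    using Hex by metis
  have sub: "\<forall>i. i+1<p \<longrightarrow> A (\<pi> (i+1)) \<subseteq> B (\<pi> i)"
  proof (intro allI impI subsetI)
    fix i C assume i: "i + 1 < p" and C: "C \<in> A (\<pi> (i + 1))"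
    have "\<pi> (i+1) < p" using perm i by (auto simp: bij_betw_def)
    then have "C \<in> Con" using AB C by auto
    then have "ind (B (\<pi> i)) C - ind (A (\<pi> (i + 1))) C \<ge> 0" using nonneg i by auto
    then show "C \<in> B (\<pi> i)" using C unfolding ind_def by (auto split: if_splits)
  qed
  have p0: "0 < p"
  proof (rule ccontr)
    assume "\<not> 0 < p"
    then have "p = 0" by simp
    moreover have "c \<one> \<in> Con" using cfg_in by simp
    ultimately show False using sum_one by auto
  qed
  show ?thesis
    by (rule chain_paradox[OF fin cfg_in cfg_surj AB H sum_one perm sub p0])
qed

end

theorem theorem4p5:
  fixes G :: "('a, 'b) monoid_scheme"
    and gs :: "'a list" and Es :: "'a set list"
    and Eqs :: "(nat list set \<times> nat list set) list"
    and \<pi> :: "nat \<Rightarrow> nat"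
  defines "Con \<equiv> configurations G gs Es"
      and "p \<equiv> length Eqs"
      and "A \<equiv> (\<lambda>t. fst (Eqs ! t))"
      and "B \<equiv> (\<lambda>t. snd (Eqs ! t))"
  assumes grp: "group G"
    and gs_in: "set gs \<subseteq> carrier G"
    and part: "is_partition_list G Es"
    and subsys: "set Eqs \<subseteq> config_equations G gs Es"
    and sum_one: "\<forall>C \<in> Con. (\<Sum>t < p. ind (B t) C - ind (A t) C) = 1"
    and perm: "bij_betw \<pi> {..<p} {..<p}"
    and nonneg: "\<forall>i. i + 1 < p \<longrightarrow> (\<forall>C \<in> Con. ind (B (\<pi> i)) C - ind (A (\<pi> (i + 1))) C \<ge> 0)"
  shows "tarski_number G \<le> enat (1 + card (A (\<pi> 0)) + card Con)"
  by (rule group.main_lemma[OF grp Con_def[THEN meta_eq_to_obj_eq] p_def[THEN meta_eq_to_obj_eq]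
        A_def[THEN meta_eq_to_obj_eq] B_def[THEN meta_eq_to_obj_eq] gs_in part subsys sum_one perm nonneg])

end
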